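(* Let $\bm{G}_t\in\mathbb{R}^{n_1\times n_2}$ and $\epsilon_t>0$, and let $\bm{L}_t=\epsilon_t\bm{I}_{n_1}+\mathrm{diag}(\bm{G}_t\bm{G}_t^T)$, $\bm{R}_t=\epsilon_t\bm{I}_{n_2}+\mathrm{diag}(\bm{G}_t^T\bm{G}_t)$. Then for every $\bm{Z}\in\mathbb{R}^{n_1\times n_2}$, $$\nu_t\|\bm{Z}\|_F^2\le\|\bm{Z}\|_{\mathcal{W}_t}^2\le\mu_t\|\bm{Z}\|_F^2,$$ where $\nu_t=\epsilon_t^{1/2}$ and $\mu_t=(\epsilon_t+\|\bm{G}_t\|_\vee^2)^{1/2}$.
   Context: $\mathrm{diag}(\bm{M})$ is the diagonal matrix with the diagonal entries of $\bm{M}$. $\|\bm{Z}\|_{\mathcal{W}_t}^2=\langle\bm{L}_t^{1/4}\bm{Z}\bm{R}_t^{1/4},\bm{Z}\rangle$ with $\langle\bm{A},\bm{B}\rangle=\mathrm{trace}(\bm{A}^T\bm{B})$. $\|\bm{Z}\|_\vee=\max\{\max_i\|\bm{Z}(i,:)\|_2,\max_j\|\bm{Z}(:,j)\|_2\}$ (largest Euclidean norm of a row or column). In the paper $\bm{G}_t=\mathcal{A}^*(\mathcal{A}\bm{X}_t-\bm{y})$ is the gradient at the current iterate. *)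

theory Defs
  imports "HOL-Analysis.Analysis"
begin

definition diag :: "real^'n^'n \<Rightarrow> real^'n^'n" where
  "diag M = (\<chi> i j. if i = j then M $ i $ i else 0)"

(* Real power of a diagonal matrix with positive diagonal: the unique positive
   definite p-th power, i.e. entrywise powr on the diagonal. Only applied to
   diagonal positive-definite matrices (L_t, R_t). *)
definition diag_powr :: "real^'n^'n \<Rightarrow> real \<Rightarrow> real^'n^'n" where
  "diag_powr D p = (\<chi> i j. if i = j then (D $ i $ i) powr p else 0)"

definition frob_inner :: "real^'n^'m \<Rightarrow> real^'n^'m \<Rightarrow> real" where
  "frob_inner A B = trace (transpose A ** B)"

definition frob_norm_sq :: "real^'n^'m \<Rightarrow> real" where
  "frob_norm_sq Z = frob_inner Z Z"

definition vee_norm :: "real^'n^'m \<Rightarrow> real" where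
  "vee_norm Z = max (Max {norm (row i Z) | i. True}) (Max {norm (column j Z) | j. True})"

definition W_norm_sq :: "real^'m^'m \<Rightarrow> real^'n^'n \<Rightarrow> real^'n^'m \<Rightarrow> real" where
  "W_norm_sq L R Z = frob_inner (diag_powr L (1/4) ** Z ** diag_powr R (1/4)) Z"

end

theory Submission
  imports Defs
begin

lemma frob_inner_sum: "frob_inner A B = (\<Sum>i\<in>UNIV. \<Sum>j\<in>UNIV. A$i$j * B$i$j)"
proof -
  have "frob_inner A B = (\<Sum>k\<in>UNIV. \<Sum>i\<in>UNIV. A$i$k * B$i$k)"
    unfolding frob_inner_def trace_def matrix_matrix_mult_def transpose_def by simp
  also have "... = (\<Sum>i\<in>UNIV. \<Sum>k\<in>UNIV. A$i$k * B$i$k)"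
    by (rule sum.swap)
  finally show ?thesis .
qed

lemma delta_sum: "(\<Sum>k\<in>UNIV. (if i = k then c else 0) * b k) = (c * b (i::'n::finite) :: real)"
proof -
  have "(\<Sum>k\<in>UNIV. (if i = k then c else 0) * b k) = (\<Sum>k\<in>UNIV. if i = k then c * b k else 0)"
    by (rule sum.cong) auto
  also have "... = c * b i" by simp
  finally show ?thesis .
qed

lemma delta_sum2: "(\<Sum>k\<in>UNIV. b k * (if k = j then c else 0)) = (b (j::'n::finite) * c :: real)"
proof -
  have "(\<Sum>k\<in>UNIV. b k * (if k = j then c else 0)) = (\<Sum>k\<in>UNIV. if k = j then b k * c else 0)"
    by (rule sum.cong) auto
  also have "... = b j * c" by simp
  finally show ?thesis .
qed

lemma dp_mult: "(diag_powr L p ** Z ** diag_powr R p)$i$j = (L$i$i) powr p * Z$i$j * (R$j$j) powr p"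
proof -
  have 1: "(diag_powr L p ** Z)$i$k = (L$i$i) powr p * Z$i$k" for k
  proof -
    have "(diag_powr L p ** Z)$i$k = (\<Sum>m\<in>UNIV. (if i = m then L$i$i powr p else 0) * Z$m$k)"
      unfolding matrix_matrix_mult_def diag_powr_def by (simp cong: if_cong)
    then show ?thesis using delta_sum[of i "L$i$i powr p" "\<lambda>m. Z$m$k"] by simp
  qed
  have "(diag_powr L p ** Z ** diag_powr R p)$i$j = (\<Sum>k\<in>UNIV. (diag_powr L p ** Z)$i$k * (if k = j then R$j$j powr p else 0))"
    unfolding matrix_matrix_mult_def[of "diag_powr L p ** Z"] by (simp add: diag_powr_def cong: if_cong)
  also have "... = (diag_powr L p ** Z)$i$j * R$j$j powr p" by (rule delta_sum2)
  finally show ?thesis using 1 by simp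
qed

lemma norm_sq_sum: "(norm (x::real^'n))^2 = (\<Sum>i\<in>UNIV. (x$i)^2)"
  unfolding norm_vec_def L2_set_def by (simp add: sum_nonneg)

lemma bnd:
  assumes e: "\<epsilon> > 0" and v: "v \<ge> 0" and a: "a \<ge> 0" and b: "b \<ge> 0"
    and av: "a \<le> v" and bv: "b \<le> v"
  shows "sqrt \<epsilon> \<le> (\<epsilon> + a^2) powr (1/4) * (\<epsilon> + b^2) powr (1/4)
    \<and> (\<epsilon> + a^2) powr (1/4) * (\<epsilon> + b^2) powr (1/4) \<le> sqrt (\<epsilon> + v^2)"
proof
  have s: "sqrt x = x powr (1/4) * x powr (1/4)" if "x > 0" for x :: real
    using that by (simp add: powr_add[symmetric] powr_half_sqrt[symmetric])
  have "\<epsilon> powr (1/4) \<le> (\<epsilon> + a^2) powr (1/4)" "\<epsilon> powr (1/4) \<le> (\<epsilon> + b^2) powr (1/4)"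
    using e by (auto intro!: powr_mono2)
  then show "sqrt \<epsilon> \<le> (\<epsilon> + a^2) powr (1/4) * (\<epsilon> + b^2) powr (1/4)"
    using s[OF e] by (simp add: mult_mono)
  have "a^2 \<le> v^2" "b^2 \<le> v^2" using a b av bv by (auto intro: power_mono)
  then have "(\<epsilon> + a^2) powr (1/4) \<le> (\<epsilon> + v^2) powr (1/4)" "(\<epsilon> + b^2) powr (1/4) \<le> (\<epsilon> + v^2) powr (1/4)"
    using e by (auto intro!: powr_mono2)
  moreover have "\<epsilon> + v^2 > 0" using e by (simp add: add_pos_nonneg)
  ultimately show "(\<epsilon> + a^2) powr (1/4) * (\<epsilon> + b^2) powr (1/4) \<le> sqrt (\<epsilon> + v^2)"
    using s[of "\<epsilon> + v^2"] by (simp add: mult_mono)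
qed

theorem lemma3p3:
  fixes G Z :: "real^'n2^'n1" and \<epsilon> :: real
  assumes "\<epsilon> > 0"
  defines "L \<equiv> \<epsilon> *\<^sub>R mat 1 + diag (G ** transpose G)"
      and "R \<equiv> \<epsilon> *\<^sub>R mat 1 + diag (transpose G ** G)"
  shows "sqrt \<epsilon> * frob_norm_sq Z \<le> W_norm_sq L R Z
       \<and> W_norm_sq L R Z \<le> sqrt (\<epsilon> + (vee_norm G)\<^sup>2) * frob_norm_sq Z"
proof -
  define v where "v = vee_norm G"
  have Li: "L$i$i = \<epsilon> + (norm (row i G))^2" for i
    unfolding L_def diag_def norm_sq_sum matrix_matrix_mult_def transpose_def row_def
    by (simp add: mat_def power2_eq_square)
  have Rj: "R$j$j = \<epsilon> + (norm (column j G))^2" for j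
    unfolding R_def diag_def norm_sq_sum matrix_matrix_mult_def transpose_def column_def
    by (simp add: mat_def power2_eq_square)
  have rv: "norm (row i G) \<le> v" for i
  proof -
    have "norm (row i G) \<le> Max {norm (row i G) | i. True}"
      by (rule Max_ge) (auto simp: full_SetCompr_eq)
    then show ?thesis unfolding v_def vee_norm_def by linarith
  qed
  have cv: "norm (column j G) \<le> v" for j
  proof -
    have "norm (column j G) \<le> Max {norm (column j G) | j. True}"
      by (rule Max_ge) (auto simp: full_SetCompr_eq)
    then show ?thesis unfolding v_def vee_norm_def by linarith
  qed
  have v0: "v \<ge> 0" using rv[of undefined] norm_ge_zero order_trans by blast
  define w where "w i j = (L$i$i) powr (1/4) * (R$j$j) powr (1/4)" for i j
  have W: "W_norm_sq L R Z = (\<Sum>i\<in>UNIV. \<Sum>j\<in>UNIV. w i j * (Z$i$j)^2)"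
    unfolding W_norm_sq_def frob_inner_sum dp_mult w_def
    by (intro sum.cong refl) (simp only: power2_eq_square mult_ac)
  have F: "frob_norm_sq Z = (\<Sum>i\<in>UNIV. \<Sum>j\<in>UNIV. (Z$i$j)^2)"
    unfolding frob_norm_sq_def frob_inner_sum by (simp only: power2_eq_square)
  have wb: "sqrt \<epsilon> \<le> w i j \<and> w i j \<le> sqrt (\<epsilon> + v^2)" for i j
    unfolding w_def Li Rj using bnd[OF assms(1) v0 norm_ge_zero norm_ge_zero rv cv] .
  have t1: "sqrt \<epsilon> * (Z$i$j)^2 \<le> w i j * (Z$i$j)^2" for i j
    using wb[of i j] by (intro mult_right_mono) auto
  have t2: "w i j * (Z$i$j)^2 \<le> sqrt (\<epsilon> + v^2) * (Z$i$j)^2" for i j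
    using wb[of i j] by (intro mult_right_mono) auto
  have "sqrt \<epsilon> * frob_norm_sq Z = (\<Sum>i\<in>UNIV. \<Sum>j\<in>UNIV. sqrt \<epsilon> * (Z$i$j)^2)"
    unfolding F by (simp only: sum_distrib_left)
  also have "... \<le> W_norm_sq L R Z"
    unfolding W by (intro sum_mono t1)
  finally have A: "sqrt \<epsilon> * frob_norm_sq Z \<le> W_norm_sq L R Z" .
  have "sqrt (\<epsilon> + v^2) * frob_norm_sq Z = (\<Sum>i\<in>UNIV. \<Sum>j\<in>UNIV. sqrt (\<epsilon> + v^2) * (Z$i$j)^2)"
    unfolding F by (simp only: sum_distrib_left)
  moreover have "W_norm_sq L R Z \<le> (\<Sum>i\<in>UNIV. \<Sum>j\<in>UNIV. sqrt (\<epsilon> + v^2) * (Z$i$j)^2)"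
    unfolding W by (intro sum_mono t2)
  ultimately have B: "W_norm_sq L R Z \<le> sqrt (\<epsilon> + v^2) * frob_norm_sq Z" by simp
  from A B show ?thesis unfolding v_def by simp
qed

end
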